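(* Let $\tau_0\in F$ satisfy $J(\tau_0)=0$. Let $A^2$ be a random variable with Beta$(\mu,\nu)$ distribution ($\mu,\nu>0$), $A=\sqrt{A^2}\ge0$, and let $X_0,X_1$ be second-order random variables independent of $A$. Define, for $\tau\in F$, $$X(\tau)=X_0\sum_{m=0}^{\infty}\frac{(-1)^mA^{2m}}{(2m)!}J(\tau)^{2m}+X_1\sum_{m=0}^{\infty}\frac{(-1)^mA^{2m}}{(2m+1)!}J(\tau)^{2m+1},$$ i.e. $X(\tau)=X_0\cos(AJ(\tau))+\frac{X_1}{A}\sin(AJ(\tau))$ (with the second term read as the series, so it is defined also when $A=0$). Then both series converge in mean square for every $\tau\in F$, $X$ is twice mean square $F^\alpha$-differentiable on $F$, and $X$ is a mean square solution of $$(D_F^\alpha)^2X(\tau)+A^2X(\tau)=0,\qquad X(\tau_0)=X_0,\qquad D_F^\alpha X(\tau_0)=X_1.$$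
   Context: Let $F\subset\mathbb{R}^n$ be a fractal curve, i.e. the image of a continuous one-to-one map $w:[a_1,b_1]\to F$ from a real interval onto $F$. For $[a,b]\subseteq[a_1,b_1]$ and $\alpha>0$, the mass function is $\gamma^\alpha(F,a,b)=\lim_{\delta\to0}\inf_{P:|P|\le\delta}\sum_{i=0}^{n-1}\frac{|w(t_{i+1})-w(t_i)|^\alpha}{\Gamma(\alpha+1)}$, the infimum over subdivisions $P=\{a=t_0<\dots<t_n=b\}$ with mesh $|P|=\max_i(t_{i+1}-t_i)\le\delta$ ($|\cdot|$ the Euclidean norm). Fix $p_0\in[a_1,b_1]$ and define the staircase function $S_F^\alpha(t)=\gamma^\alpha(F,p_0,t)$ for $t\ge p_0$ and $S_F^\alpha(t)=-\gamma^\alpha(F,t,p_0)$ for $t<p_0$. Standing assumption: $\alpha$ is such that $S_F^\alpha$ is finite, continuous and strictly increasing on $[a_1,b_1]$; set $J(\theta)=S_F^\alpha(w^{-1}(\theta))$ for $\theta\in F$. Limits $\theta'\to\theta$ are taken through points $\theta'\in F$. All random variables live on a probability space $(\mathcal S,\mathcal F,\mathbb P)$; a random process on $F$ is a family $X(\tau)$, $\tau\in F$, of random variables, of second order if $E[X(\tau)^2]<\infty$ for all $\tau$. It is mean square $F^\alpha$-differentiable at $\tau$ if there is a second-order random variable $D_F^\alpha X(\tau)$ with $\lim_{\tau'\to\tau,\ \tau'\neq\tau}E\big[\big(\frac{X(\tau')-X(\tau)}{J(\tau')-J(\tau)}-D_F^\alpha X(\tau)\big)^2\big]=0$; $(D_F^\alpha)^2X=D_F^\alpha(D_F^\alpha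 X)$. Mean square convergence of a series means mean square convergence ($E[(S_N-S)^2]\to0$) of its partial sums $S_N$. The equation is required to hold as an equality of random variables almost surely for every $\tau\in F$. *)

theory Defs
  imports "HOL-Probability.Probability"
begin

definition subdivs :: "real \<Rightarrow> real \<Rightarrow> real \<Rightarrow> (nat \<times> (nat \<Rightarrow> real)) set" where
  "subdivs a b \<delta> = {(n, t). t 0 = a \<and> t n = b \<and>
      (\<forall>i<n. t i < t (Suc i) \<and> t (Suc i) - t i \<le> \<delta>)}"

definition mass :: "real \<Rightarrow> (real \<Rightarrow> 'a::euclidean_space) \<Rightarrow> real \<Rightarrow> real \<Rightarrow> ereal" where
  "mass \<alpha> w a b = Lim (at_right 0)
     (\<lambda>\<delta>. INF nt \<in> subdivs a b \<delta>.
        ereal (\<Sum>i<fst nt. norm (w (snd nt (Suc i)) - w (snd nt i)) powr \<alpha> / Gamma (\<alpha> + 1)))"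

definition staircase :: "real \<Rightarrow> (real \<Rightarrow> 'a::euclidean_space) \<Rightarrow> real \<Rightarrow> real \<Rightarrow> real" where
  "staircase \<alpha> w p0 t =
     (if p0 \<le> t then real_of_ereal (mass \<alpha> w p0 t) else - real_of_ereal (mass \<alpha> w t p0))"

definition Jfun :: "real \<Rightarrow> (real \<Rightarrow> 'a::euclidean_space) \<Rightarrow> real \<Rightarrow> real \<Rightarrow> real \<Rightarrow> 'a \<Rightarrow> real" where
  "Jfun \<alpha> w p0 a1 b1 \<theta> = staircase \<alpha> w p0 (inv_into {a1..b1} w \<theta>)"

definition second_order :: "'s measure \<Rightarrow> ('s \<Rightarrow> real) \<Rightarrow> bool" where
  "second_order M Y \<longleftrightarrow> Y \<in> borel_measurable M \<and> integrable M (\<lambda>s. (Y s)\<^sup>2)"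

definition has_ms_deriv ::
  "'s measure \<Rightarrow> 'a::topological_space set \<Rightarrow> ('a \<Rightarrow> real) \<Rightarrow> ('a \<Rightarrow> 's \<Rightarrow> real) \<Rightarrow> ('s \<Rightarrow> real) \<Rightarrow> 'a \<Rightarrow> bool" where
  "has_ms_deriv M F J X D \<tau> \<longleftrightarrow> second_order M D \<and>
     ((\<lambda>\<tau>'. \<integral>\<^sup>+ s. ennreal (((X \<tau>' s - X \<tau> s) / (J \<tau>' - J \<tau>) - D s)\<^sup>2) \<partial>M) \<longlongrightarrow> 0)
       (at \<tau> within F)"

definition ms_converges :: "'s measure \<Rightarrow> (nat \<Rightarrow> 's \<Rightarrow> real) \<Rightarrow> ('s \<Rightarrow> real) \<Rightarrow> bool" where
  "ms_converges M S Y \<longleftrightarrow> (\<lambda>N. \<integral>\<^sup>+ s. ennreal ((S N s - Y s)\<^sup>2) \<partial>M) \<longlonglongrightarrow> 0"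

definition beta_density :: "real \<Rightarrow> real \<Rightarrow> real \<Rightarrow> real" where
  "beta_density \<mu> \<nu> x =
     (if 0 < x \<and> x < 1 then x powr (\<mu> - 1) * (1 - x) powr (\<nu> - 1) / Beta \<mu> \<nu> else 0)"

end

theory Submission
  imports Defs
begin
lemma lip1:
  fixes f f' :: "real \<Rightarrow> real"
  assumes d: "\<And>z. (f has_real_derivative f' z) (at z)" and b: "\<And>z. \<bar>f' z\<bar> \<le> 1"
  shows "\<bar>f u - f v\<bar> \<le> \<bar>u - v\<bar>"
proof -
  have *: "\<bar>f y - f x\<bar> \<le> \<bar>y - x\<bar>" if xy: "x < y" for x y
  proof -
    obtain z where "f y - f x = (y - x) * f' z" using MVT2[OF xy, of f f'] d by blast
    hence "\<bar>f y - f x\<bar> = \<bar>y - x\<bar> * \<bar>f' z\<bar>" by (simp add: abs_mult)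
    also have "\<dots> \<le> \<bar>y - x\<bar>" using b[of z] by (simp add: mult_left_le)
    finally show ?thesis .
  qed
  show ?thesis
    using *[of u v] *[of v u] by (cases u v rule: linorder_cases) (auto simp: abs_minus_commute)
qed

lemma taylor2:
  fixes f f' :: "real \<Rightarrow> real"
  assumes d: "\<And>z. (f has_real_derivative f' z) (at z)" and b: "\<And>u v. \<bar>f' u - f' v\<bar> \<le> \<bar>u - v\<bar>"
  shows "\<bar>f y - f x - f' x * (y - x)\<bar> \<le> (y - x)\<^sup>2"
proof (cases x y rule: linorder_cases)
  case less
  obtain z where z: "x < z" "z < y" "f y - f x = (y - x) * f' z" using MVT2[OF less, of f f'] d by blast
  have e: "(y-x)*(f' z - f' x) = (y-x)*f' z - f' x * (y-x)" by (simp add: algebra_simps)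
  have "\<bar>f y - f x - f' x * (y - x)\<bar> = \<bar>(y-x)*(f' z - f' x)\<bar>" using e z(3) by simp
  hence "\<bar>f y - f x - f' x * (y - x)\<bar> = \<bar>y - x\<bar> * \<bar>f' z - f' x\<bar>"
    by (simp add: abs_mult)
  also have "\<dots> \<le> \<bar>y - x\<bar> * \<bar>y - x\<bar>"
    using b[of z x] z by (intro mult_left_mono) auto
  finally show ?thesis by (simp add: power2_eq_square)
next
  case greater
  obtain z where z: "y < z" "z < x" "f x - f y = (x - y) * f' z" using MVT2[OF greater, of f f'] d by blast
  have e: "(x-y)*(f' z - f' x) = (x-y)*f' z - f' x * (x-y)" by (simp add: algebra_simps)
  have "\<bar>f y - f x - f' x * (y - x)\<bar> = \<bar>(x-y)*(f' z - f' x)\<bar>" using e z(3) by (simp add: algebra_simps)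
  hence "\<bar>f y - f x - f' x * (y - x)\<bar> = \<bar>x - y\<bar> * \<bar>f' z - f' x\<bar>"
    by (simp add: abs_mult)
  also have "\<dots> \<le> \<bar>x - y\<bar> * \<bar>x - y\<bar>"
    using b[of z x] z by (intro mult_left_mono) auto
  finally show ?thesis by (simp add: power2_eq_square algebra_simps)
qed simp

lemma sin_t2: "\<bar>sin (y::real) - sin x - cos x * (y - x)\<bar> \<le> (y - x)\<^sup>2"
  by (rule taylor2[where f'=cos]) (auto intro!: derivative_eq_intros lip1[where f' = "\<lambda>z. - sin z"])

lemma cos_t2: "\<bar>cos (y::real) - cos x + sin x * (y - x)\<bar> \<le> (y - x)\<^sup>2"
proof -
  have l: "\<bar>sin v - sin u\<bar> \<le> \<bar>u - v\<bar>" for u v :: real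
    using lip1[where f=sin and f'=cos and u=v and v=u] by (auto intro!: derivative_eq_intros simp: abs_minus_commute)
  have "\<bar>cos y - cos x - (- sin x) * (y - x)\<bar> \<le> (y - x)\<^sup>2"
    by (rule taylor2[where f'="\<lambda>z. - sin z"]) (auto intro!: derivative_eq_intros l)
  thus ?thesis by simp
qed
definition Sf :: "real \<Rightarrow> real \<Rightarrow> real" where
  "Sf a j = (if a = 0 then j else sin (a * j) / a)"

lemma div_bound:
  fixes N h :: real
  assumes "h \<noteq> 0" "\<bar>N\<bar> \<le> h\<^sup>2"
  shows "\<bar>N / h\<bar> \<le> \<bar>h\<bar>"
proof -
  have "\<bar>N / h\<bar> = \<bar>N\<bar> / \<bar>h\<bar>" by simp
  also have "\<dots> \<le> h\<^sup>2 / \<bar>h\<bar>" using assms by (intro divide_right_mono) auto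
  also have "\<dots> = \<bar>h\<bar>" using assms(1) by (simp add: power2_eq_square field_simps)
  finally show ?thesis .
qed

lemma q0_bound:
  fixes a j j' :: real
  assumes "0 \<le> a" "a \<le> 1" "j' \<noteq> j"
  shows "\<bar>(cos (a*j') - cos (a*j)) / (j' - j) + a * sin (a*j)\<bar> \<le> \<bar>j' - j\<bar>"
proof -
  have h: "j' - j \<noteq> 0" using assms by simp
  have "\<bar>cos (a*j') - cos (a*j) + sin (a*j) * (a*j' - a*j)\<bar> \<le> (a*j' - a*j)\<^sup>2" by (rule cos_t2)
  also have "(a*j' - a*j)\<^sup>2 = a\<^sup>2 * (j'-j)\<^sup>2" by (simp add: power2_eq_square algebra_simps)
  also have "\<dots> \<le> 1 * (j'-j)\<^sup>2" using assms by (intro mult_right_mono) (auto simp: power_le_one)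
  finally have "\<bar>(cos (a*j') - cos (a*j) + sin (a*j) * (a*j' - a*j)) / (j'-j)\<bar> \<le> \<bar>j'-j\<bar>"
    using div_bound[OF h] by simp
  also have "(cos (a*j') - cos (a*j) + sin (a*j) * (a*j' - a*j)) / (j'-j)
     = (cos (a*j') - cos (a*j)) / (j' - j) + a * sin (a*j)" using h by (simp add: field_simps)
  finally show ?thesis .
qed

lemma q1_bound:
  fixes a j j' :: real
  assumes "0 \<le> a" "a \<le> 1" "j' \<noteq> j"
  shows "\<bar>(Sf a j' - Sf a j) / (j' - j) - cos (a*j)\<bar> \<le> \<bar>j' - j\<bar>"
proof (cases "a = 0")
  case True thus ?thesis using assms by (simp add: Sf_def)
next
  case False
  hence a: "0 < a" using assms by simp
  have h: "j' - j \<noteq> 0" using assms by simp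
  have "\<bar>sin (a*j') - sin (a*j) - cos (a*j) * (a*j' - a*j)\<bar> \<le> (a*j' - a*j)\<^sup>2" by (rule sin_t2)
  also have "(a*j' - a*j)\<^sup>2 = a * (a * (j'-j)\<^sup>2)" by (simp add: power2_eq_square algebra_simps)
  finally have 1: "\<bar>(sin (a*j') - sin (a*j) - cos (a*j) * (a*j' - a*j)) / a\<bar> \<le> a * (j'-j)\<^sup>2"
    using a by (simp add: field_simps)
  also have "\<dots> \<le> 1 * (j'-j)\<^sup>2" using assms by (intro mult_right_mono) auto
  finally have 2: "\<bar>(sin (a*j') - sin (a*j) - cos (a*j) * (a*j' - a*j)) / a\<bar> \<le> (j'-j)\<^sup>2" by simp
  have "\<bar>((sin (a*j') - sin (a*j) - cos (a*j) * (a*j' - a*j)) / a) / (j'-j)\<bar> \<le> \<bar>j'-j\<bar>"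
    by (rule div_bound[OF h 2])
  also have "((sin (a*j') - sin (a*j) - cos (a*j) * (a*j' - a*j)) / a) / (j'-j)
     = (Sf a j' - Sf a j) / (j' - j) - cos (a*j)" using h a by (simp add: Sf_def field_simps)
  finally show ?thesis .
qed

lemma p0_bound:
  fixes a j j' :: real
  assumes "0 \<le> a" "a \<le> 1" "j' \<noteq> j"
  shows "\<bar>(- a * sin (a*j') - - a * sin (a*j)) / (j' - j) + a\<^sup>2 * cos (a*j)\<bar> \<le> \<bar>j' - j\<bar>"
proof -
  have h: "j' - j \<noteq> 0" using assms by simp
  have "\<bar>sin (a*j') - sin (a*j) - cos (a*j) * (a*j' - a*j)\<bar> \<le> (a*j' - a*j)\<^sup>2" by (rule sin_t2)
  also have "(a*j' - a*j)\<^sup>2 = a\<^sup>2 * (j'-j)\<^sup>2" by (simp add: power2_eq_square algebra_simps)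
  finally have 1: "\<bar>a * (sin (a*j') - sin (a*j) - cos (a*j) * (a*j' - a*j))\<bar> \<le> a * (a\<^sup>2 * (j'-j)\<^sup>2)"
    using assms by (simp add: abs_mult mult_left_mono)
  also have "\<dots> \<le> 1 * (1 * (j'-j)\<^sup>2)" using assms
    by (intro mult_mono) (auto simp: power_le_one)
  finally have "\<bar>(a * (sin (a*j') - sin (a*j) - cos (a*j) * (a*j' - a*j))) / (j'-j)\<bar> \<le> \<bar>j'-j\<bar>"
    using div_bound[OF h] by simp
  hence "\<bar>- ((a * (sin (a*j') - sin (a*j) - cos (a*j) * (a*j' - a*j))) / (j'-j))\<bar> \<le> \<bar>j'-j\<bar>"
    by simp
  also have "- ((a * (sin (a*j') - sin (a*j) - cos (a*j) * (a*j' - a*j))) / (j'-j))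
     = (- a * sin (a*j') - - a * sin (a*j)) / (j' - j) + a\<^sup>2 * cos (a*j)"
    using h by (simp add: field_simps power2_eq_square)
  finally show ?thesis .
qed

lemma sq_bound:
  fixes x0 x1 q0 q1 d :: real
  assumes "\<bar>q0\<bar> \<le> d" "\<bar>q1\<bar> \<le> d"
  shows "(x0*q0 + x1*q1)\<^sup>2 \<le> (x0\<^sup>2 + x1\<^sup>2) * (2 * d\<^sup>2)"
proof -
  have "(x0*q0 + x1*q1)\<^sup>2 \<le> 2 * (x0*q0)\<^sup>2 + 2 * (x1*q1)\<^sup>2"
    using sum_squares_ge_zero[of "x0*q0 - x1*q1" 0] by (simp add: power2_eq_square algebra_simps)
  also have "(x0*q0)\<^sup>2 \<le> x0\<^sup>2 * d\<^sup>2" unfolding power_mult_distrib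
    using power_mono[OF assms(1) abs_ge_zero, of 2] power_mono[OF assms(2) abs_ge_zero, of 2]
    by (intro mult_left_mono) auto
  hence "2 * (x0*q0)\<^sup>2 \<le> 2 * (x0\<^sup>2 * d\<^sup>2)" by simp
  also have "(x1*q1)\<^sup>2 \<le> x1\<^sup>2 * d\<^sup>2" unfolding power_mult_distrib
    using power_mono[OF assms(1) abs_ge_zero, of 2] power_mono[OF assms(2) abs_ge_zero, of 2]
    by (intro mult_left_mono) auto
  hence "2 * (x1*q1)\<^sup>2 \<le> 2 * (x1\<^sup>2 * d\<^sup>2)" by simp
  finally show ?thesis by (simp add: algebra_simps)
qed
lemma cos_series: "(\<Sum>m. (-1) ^ m * a ^ (2 * m) / fact (2 * m) * j ^ (2 * m)) = cos (a * (j::real))"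
proof -
  have "(\<lambda>m. (-1) ^ m * a ^ (2 * m) / fact (2 * m) * j ^ (2 * m)) = (\<lambda>n. (- 1) ^ n / (fact (2 * n)) * (a*j) ^ (2 * n))"
    by (simp add: power_mult_distrib fun_eq_iff mult_ac)
  thus ?thesis using cos_paired[of "a*j"] by (simp add: sums_iff)
qed

lemma sin_series: "(\<lambda>m. (-1) ^ m * a ^ (2 * m) / fact (2 * m + 1) * j ^ (2 * m + 1)) sums Sf a (j::real)"
proof (cases "a = 0")
  case True
  have "(\<lambda>m. (-1) ^ m * a ^ (2 * m) / fact (2 * m + 1) * j ^ (2 * m + 1)) = (\<lambda>m. if m = 0 then j else 0)"
    using True by (auto simp: fun_eq_iff)
  thus ?thesis using True sums_single[of 0 "\<lambda>_. j"] by (simp add: Sf_def)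
next
  case False
  have "(\<lambda>m. (-1) ^ m * a ^ (2 * m) / fact (2 * m + 1) * j ^ (2 * m + 1)) = (\<lambda>n. (- 1) ^ n / (fact (2 * n + 1)) * (a*j) ^ (2 * n + 1) / a)"
  proof (rule ext)
    fix n
    have e: "(a*j) ^ (2 * n + 1) / a = a ^ (2 * n) * j ^ (2 * n + 1)"
      using False by (simp add: power_mult_distrib)
    have "(- 1) ^ n / (fact (2 * n + 1)) * (a*j) ^ (2 * n + 1) / a = (- 1) ^ n / (fact (2 * n + 1)) * ((a*j) ^ (2 * n + 1) / a)"
      by simp
    also have "\<dots> = (-1) ^ n * a ^ (2 * n) / fact (2 * n + 1) * j ^ (2 * n + 1)" unfolding e by simp
    finally show "(-1) ^ n * a ^ (2 * n) / fact (2 * n + 1) * j ^ (2 * n + 1) = (- 1) ^ n / (fact (2 * n + 1)) * (a*j) ^ (2 * n + 1) / a" by simp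
  qed
  thus ?thesis using sums_divide[OF sin_paired[of "a*j"], of a] False by (simp add: Sf_def)
qed

lemma summable_even_exp: "summable (\<lambda>m. \<bar>x\<bar> ^ (2 * m) / fact (2 * m) :: real)"
proof -
  define f where "f n = (if even n then \<bar>x\<bar> ^ n / fact n else 0 :: real)" for n
  have "summable f"
    by (rule summable_comparison_test'[OF summable_exp[of "\<bar>x\<bar>"], of 0]) (auto simp: f_def divide_inverse mult.commute)
  moreover have "strict_mono (\<lambda>m::nat. 2 * m)" by (auto simp: strict_mono_def)
  ultimately have "summable (\<lambda>m. f (2 * m))"
    by (subst summable_mono_reindex) (auto simp: f_def elim!: evenE)
  thus ?thesis by (simp add: f_def)
qed

lemma tail_bound:
  fixes f g :: "nat \<Rightarrow> real"
  assumes b: "\<And>m. \<bar>f m\<bar> \<le> g m" and g: "summable g"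
  shows "\<bar>(\<Sum>m<N. f m) - suminf f\<bar> \<le> suminf g - (\<Sum>m<N. g m)"
proof -
  have af: "summable (\<lambda>n. \<bar>f n\<bar>)" using b g by (intro summable_rabs_comparison_test) auto
  hence f: "summable f" by (rule summable_rabs_cancel)
  have "(\<Sum>m<N. f m) - suminf f = - (\<Sum>n. f (n + N))" using suminf_split_initial_segment[OF f, of N] by simp
  hence "\<bar>(\<Sum>m<N. f m) - suminf f\<bar> = \<bar>\<Sum>n. f (n + N)\<bar>" by simp
  also have "\<dots> \<le> (\<Sum>n. \<bar>f (n + N)\<bar>)" by (rule summable_rabs) (use summable_iff_shift[of "\<lambda>n. \<bar>f n\<bar>" N] af in simp)
  also have "\<dots> \<le> (\<Sum>n. g (n + N))" by (rule suminf_le) (use summable_iff_shift[of "\<lambda>n. \<bar>f n\<bar>" N] summable_iff_shift[of g N] af g b in auto)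
  also have "\<dots> = suminf g - (\<Sum>m<N. g m)" by (rule suminf_minus_initial_segment[OF g])
  finally show ?thesis .
qed

lemma tail_lim: "summable g \<Longrightarrow> (\<lambda>N. suminf g - (\<Sum>m<N. g m :: real)) \<longlonglongrightarrow> 0"
  using tendsto_diff[OF tendsto_const summable_LIMSEQ, of g "suminf g"] by simp
lemma ms_lemma:
  fixes Z :: "'b \<Rightarrow> 's \<Rightarrow> real" and e :: "'b \<Rightarrow> real"
  assumes V: "integrable M V" "\<And>s. 0 \<le> V s" and e: "(e \<longlongrightarrow> 0) F" "\<And>N. 0 \<le> e N"
    and ev: "\<forall>\<^sub>F N in F. AE s in M. (Z N s)\<^sup>2 \<le> V s * e N"
  shows "((\<lambda>N. \<integral>\<^sup>+ s. ennreal ((Z N s)\<^sup>2) \<partial>M) \<longlongrightarrow> 0) F"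
proof -
  define k where "k = integral\<^sup>L M V"
  have K: "(\<integral>\<^sup>+ s. ennreal (V s) \<partial>M) = ennreal k" unfolding k_def
    by (rule nn_integral_eq_integral) (use V in auto)
  have k0: "0 \<le> k" unfolding k_def by (rule integral_nonneg_AE) (use V in auto)
  have Vm: "V \<in> borel_measurable M" using V by auto
  show ?thesis
  proof (rule tendsto_sandwich[where f = "\<lambda>_. 0" and h = "\<lambda>N. ennreal (e N * k)"])
    show "\<forall>\<^sub>F N in F. 0 \<le> \<integral>\<^sup>+ s. ennreal ((Z N s)\<^sup>2) \<partial>M" by simp
    show "\<forall>\<^sub>F N in F. (\<integral>\<^sup>+ s. ennreal ((Z N s)\<^sup>2) \<partial>M) \<le> ennreal (e N * k)"
      using ev
    proof (rule eventually_mono)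
      fix N assume ae: "AE s in M. (Z N s)\<^sup>2 \<le> V s * e N"
      have "(\<integral>\<^sup>+ s. ennreal ((Z N s)\<^sup>2) \<partial>M) \<le> (\<integral>\<^sup>+ s. ennreal (e N) * ennreal (V s) \<partial>M)"
        by (rule nn_integral_mono_AE) (use ae in \<open>auto simp: ennreal_mult[symmetric] e(2) V(2) mult.commute intro!: ennreal_leI\<close>)
      also have "\<dots> = ennreal (e N) * ennreal k" using nn_integral_cmult[of "\<lambda>s. ennreal (V s)" M "ennreal (e N)"] Vm K
        by simp
      also have "\<dots> = ennreal (e N * k)" using e(2) k0 by (simp add: ennreal_mult)
      finally show "(\<integral>\<^sup>+ s. ennreal ((Z N s)\<^sup>2) \<partial>M) \<le> ennreal (e N * k)" .
    qed
    show "((\<lambda>_. 0::ennreal) \<longlongrightarrow> 0) F" by simp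
    show "((\<lambda>N. ennreal (e N * k)) \<longlongrightarrow> 0) F"
      using tendsto_ennrealI[OF tendsto_mult[OF e(1) tendsto_const[of k]]] by simp
  qed
qed
lemma ccos_le:
  fixes a j :: real assumes "0 \<le> a" "a \<le> 1"
  shows "\<bar>(-1) ^ m * a ^ (2 * m) / fact (2 * m) * j ^ (2 * m)\<bar> \<le> \<bar>j\<bar> ^ (2 * m) / fact (2 * m)"
proof -
  have "\<bar>(-1) ^ m * a ^ (2 * m) / fact (2 * m) * j ^ (2 * m)\<bar> = a ^ (2 * m) * (\<bar>j\<bar> ^ (2 * m) / fact (2 * m))"
    using assms by (simp add: abs_mult power_abs)
  also have "\<dots> \<le> 1 * (\<bar>j\<bar> ^ (2 * m) / fact (2 * m))"
    using assms by (intro mult_right_mono power_le_one) auto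
  finally show ?thesis by simp
qed

lemma csin_le:
  fixes a j :: real assumes "0 \<le> a" "a \<le> 1"
  shows "\<bar>(-1) ^ m * a ^ (2 * m) / fact (2 * m + 1) * j ^ (2 * m + 1)\<bar> \<le> \<bar>j\<bar> * (\<bar>j\<bar> ^ (2 * m) / fact (2 * m))"
proof -
  have "\<bar>(-1) ^ m * a ^ (2 * m) / fact (2 * m + 1) * j ^ (2 * m + 1)\<bar> = a ^ (2 * m) * (\<bar>j\<bar> * \<bar>j\<bar> ^ (2 * m) / fact (2 * m + 1))"
    using assms by (simp add: abs_mult power_abs)
  also have "\<dots> \<le> 1 * (\<bar>j\<bar> * \<bar>j\<bar> ^ (2 * m) / fact (2 * m + 1))"
    using assms by (intro mult_right_mono power_le_one) auto
  also have "\<dots> \<le> \<bar>j\<bar> * \<bar>j\<bar> ^ (2 * m) / fact (2 * m)"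
    by (simp only: mult_1_left, rule divide_left_mono) (auto intro: fact_mono)
  finally show ?thesis by simp
qed

lemma quot_id:
  fixes h :: real assumes "h \<noteq> 0"
  shows "((x0 * c2 + x1 * s2) - (x0 * c1 + x1 * s1)) / h - (x0 * dc + x1 * ds) = x0 * ((c2 - c1) / h - dc) + x1 * ((s2 - s1) / h - ds)"
  using assms by (simp add: field_simps)

lemma mul_sq1:
  fixes x y P L t :: real assumes "\<bar>P - L\<bar> \<le> t"
  shows "(x * P - x * L)\<^sup>2 \<le> (x\<^sup>2 + y\<^sup>2) * t\<^sup>2"
proof -
  have "(P - L)\<^sup>2 \<le> t\<^sup>2" using power_mono[OF assms abs_ge_zero, of 2] by simp
  hence "x\<^sup>2 * (P - L)\<^sup>2 \<le> x\<^sup>2 * t\<^sup>2" by (intro mult_left_mono) auto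
  also have "\<dots> \<le> (x\<^sup>2 + y\<^sup>2) * t\<^sup>2" by (intro mult_right_mono) auto
  finally show ?thesis by (simp add: power_mult_distrib right_diff_distrib[symmetric])
qed

lemma mul_sq2:
  fixes x y P L t :: real assumes "\<bar>P - L\<bar> \<le> t"
  shows "(y * P - y * L)\<^sup>2 \<le> (x\<^sup>2 + y\<^sup>2) * t\<^sup>2"
  using mul_sq1[OF assms, of y x] by (simp add: add.commute)

theorem mainTheorem11:
  fixes w :: "real \<Rightarrow> 'a::euclidean_space"
    and F :: "'a set"
    and a1 b1 p0 \<alpha> \<mu> \<nu> :: real
    and \<tau>0 :: 'a
    and M :: "'s measure"
    and A2 X0 X1 :: "'s \<Rightarrow> real"
  defines "J \<equiv> Jfun \<alpha> w p0 a1 b1"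
    and "A \<equiv> (\<lambda>s. sqrt (A2 s))"
  defines "Ccos \<equiv> (\<lambda>\<tau> s m. (-1) ^ m * A s ^ (2 * m) / fact (2 * m) * J \<tau> ^ (2 * m))"
    and "Csin \<equiv> (\<lambda>\<tau> s m. (-1) ^ m * A s ^ (2 * m) / fact (2 * m + 1) * J \<tau> ^ (2 * m + 1))"
  defines "X \<equiv> (\<lambda>\<tau> s. X0 s * (\<Sum>m. Ccos \<tau> s m) + X1 s * (\<Sum>m. Csin \<tau> s m))"
  assumes "a1 \<le> b1" and "p0 \<in> {a1..b1}"
    and "continuous_on {a1..b1} w" and "inj_on w {a1..b1}" and "F = w ` {a1..b1}"
    and "\<alpha> > 0"
    and "\<forall>t\<in>{a1..b1}. (if p0 \<le> t then mass \<alpha> w p0 t else mass \<alpha> w t p0) < \<infinity>"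
    and "continuous_on {a1..b1} (staircase \<alpha> w p0)"
    and "strict_mono_on {a1..b1} (staircase \<alpha> w p0)"
    and "\<tau>0 \<in> F" and "J \<tau>0 = 0"
    and "prob_space M"
    and "\<mu> > 0" and "\<nu> > 0"
    and "distributed M lborel A2 (\<lambda>x. ennreal (beta_density \<mu> \<nu> x))"
    and "second_order M X0" and "second_order M X1"
    and "prob_space.indep_var M borel A borel X0"
    and "prob_space.indep_var M borel A borel X1"
  shows "(\<forall>\<tau>\<in>F. ms_converges M (\<lambda>N s. X0 s * (\<Sum>m<N. Ccos \<tau> s m)) (\<lambda>s. X0 s * (\<Sum>m. Ccos \<tau> s m))
                \<and> ms_converges M (\<lambda>N s. X1 s * (\<Sum>m<N. Csin \<tau> s m)) (\<lambda>s. X1 s * (\<Sum>m. Csin \<tau> s m)))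
       \<and> (\<exists>DX DDX. (\<forall>\<tau>\<in>F. has_ms_deriv M F J X (DX \<tau>) \<tau>)
                 \<and> (\<forall>\<tau>\<in>F. has_ms_deriv M F J DX (DDX \<tau>) \<tau>)
                 \<and> (\<forall>\<tau>\<in>F. AE s in M. DDX \<tau> s + (A s)\<^sup>2 * X \<tau> s = 0)
                 \<and> (AE s in M. X \<tau>0 s = X0 s)
                 \<and> (AE s in M. DX \<tau>0 s = X1 s))"
proof -
  note asm = assms(6-)
  have dist: "distributed M lborel A2 (\<lambda>x. ennreal (beta_density \<mu> \<nu> x))" by fact
  have A2m[measurable]: "A2 \<in> borel_measurable M"
    using distributed_measurable[OF dist] by simp
  have X0m[measurable]: "X0 \<in> borel_measurable M" and X1m[measurable]: "X1 \<in> borel_measurable M"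
    using \<open>second_order M X0\<close> \<open>second_order M X1\<close> by (auto simp: second_order_def)
  have Am[measurable]: "A \<in> borel_measurable M" unfolding A_def by measurable
  have "AE x in distr M lborel A2. 0 \<le> x \<and> x \<le> 1"
    unfolding distributed_distr_eq_density[OF dist]
    by (subst AE_density) (auto simp: beta_density_def split: if_splits)
  hence AE01: "AE s in M. 0 \<le> A2 s \<and> A2 s \<le> 1"
    by (subst (asm) AE_distr_iff) (use distributed_measurable[OF dist] in auto)
  have AEa: "AE s in M. 0 \<le> A s \<and> A s \<le> 1 \<and> (A s)\<^sup>2 = A2 s"
    using AE01 by eventually_elim (auto simp: A_def)
  define V where "V s = (X0 s)\<^sup>2 + (X1 s)\<^sup>2" for s
  have V: "integrable M V" "\<And>s. 0 \<le> V s"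
    using \<open>second_order M X0\<close> \<open>second_order M X1\<close> unfolding V_def
    by (auto simp: second_order_def intro!: Bochner_Integration.integrable_add)
  have Xc: "X = (\<lambda>\<tau> s. X0 s * cos (A s * J \<tau>) + X1 s * Sf (A s) (J \<tau>))"
    unfolding X_def Ccos_def Csin_def using cos_series sin_series by (simp add: sums_iff fun_eq_iff)
  define DX where "DX \<tau> s = X0 s * (- A s * sin (A s * J \<tau>)) + X1 s * cos (A s * J \<tau>)" for \<tau> s
  define DDX where "DDX \<tau> s = X0 s * (- (A s)\<^sup>2 * cos (A s * J \<tau>)) + X1 s * (- A s * sin (A s * J \<tau>))" for \<tau> s
  have Jeq: "J = (\<lambda>\<theta>. staircase \<alpha> w p0 (inv_into {a1..b1} w \<theta>))"
    unfolding J_def Jfun_def by simp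
  have ci: "continuous_on F (inv_into {a1..b1} w)"
    unfolding \<open>F = w ` {a1..b1}\<close>
    by (rule continuous_on_inv) (use \<open>continuous_on {a1..b1} w\<close> \<open>inj_on w {a1..b1}\<close> in auto)
  have Jcont: "continuous_on F J" unfolding Jeq
    by (rule continuous_on_compose2[OF \<open>continuous_on {a1..b1} (staircase \<alpha> w p0)\<close> ci])
       (auto simp: \<open>F = w ` {a1..b1}\<close> inv_into_f_f[OF \<open>inj_on w {a1..b1}\<close>])
  have Jinj: "J \<tau>' \<noteq> J \<tau>" if "\<tau>' \<in> F" "\<tau> \<in> F" "\<tau>' \<noteq> \<tau>" for \<tau> \<tau>'
  proof
    assume "J \<tau>' = J \<tau>"
    hence e: "staircase \<alpha> w p0 (inv_into {a1..b1} w \<tau>') = staircase \<alpha> w p0 (inv_into {a1..b1} w \<tau>)"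
      unfolding Jeq .
    have i1: "inv_into {a1..b1} w \<tau>' \<in> {a1..b1}" "inv_into {a1..b1} w \<tau> \<in> {a1..b1}"
      using inv_into_into[OF that(1)[unfolded \<open>F = w ` {a1..b1}\<close>]] inv_into_into[OF that(2)[unfolded \<open>F = w ` {a1..b1}\<close>]] by auto
    have "inv_into {a1..b1} w \<tau>' = inv_into {a1..b1} w \<tau>"
      by (rule inj_onD[OF strict_mono_on_imp_inj_on[OF \<open>strict_mono_on {a1..b1} (staircase \<alpha> w p0)\<close>] e i1])
    hence "w (inv_into {a1..b1} w \<tau>') = w (inv_into {a1..b1} w \<tau>)" by simp
    thus False using that by (simp add: \<open>F = w ` {a1..b1}\<close> f_inv_into_f)
  qed
  have Jlim: "((\<lambda>\<tau>'. 2 * (J \<tau>' - J \<tau>)\<^sup>2) \<longlongrightarrow> 0) (at \<tau> within F)" if "\<tau> \<in> F" for \<tau>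
  proof -
    have "(J \<longlongrightarrow> J \<tau>) (at \<tau> within F)" using Jcont that by (simp add: continuous_on_def)
    hence "((\<lambda>\<tau>'. J \<tau>' - J \<tau>) \<longlongrightarrow> 0) (at \<tau> within F)" by (simp add: LIM_zero)
    from tendsto_mult[OF tendsto_const[of 2] tendsto_power[OF this, of 2]] show ?thesis by simp
  qed
  have ev: "\<forall>\<^sub>F \<tau>' in at \<tau> within F. \<tau>' \<in> F \<and> J \<tau>' \<noteq> J \<tau>" if "\<tau> \<in> F" for \<tau>
    unfolding eventually_at_filter using Jinj that by (auto intro: always_eventually)
  have P1: "\<forall>\<tau>\<in>F. ms_converges M (\<lambda>N s. X0 s * (\<Sum>m<N. Ccos \<tau> s m)) (\<lambda>s. X0 s * (\<Sum>m. Ccos \<tau> s m))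
                \<and> ms_converges M (\<lambda>N s. X1 s * (\<Sum>m<N. Csin \<tau> s m)) (\<lambda>s. X1 s * (\<Sum>m. Csin \<tau> s m))"
  proof
    fix \<tau> assume "\<tau> \<in> F"
    define g where "g m = \<bar>J \<tau>\<bar> ^ (2 * m) / fact (2 * m)" for m
    define g' where "g' m = \<bar>J \<tau>\<bar> * g m" for m
    have gs: "summable g" unfolding g_def by (rule summable_even_exp)
    have gs': "summable g'" unfolding g'_def using gs by (rule summable_mult)
    show "ms_converges M (\<lambda>N s. X0 s * (\<Sum>m<N. Ccos \<tau> s m)) (\<lambda>s. X0 s * (\<Sum>m. Ccos \<tau> s m))
                \<and> ms_converges M (\<lambda>N s. X1 s * (\<Sum>m<N. Csin \<tau> s m)) (\<lambda>s. X1 s * (\<Sum>m. Csin \<tau> s m))"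
    proof
      show "ms_converges M (\<lambda>N s. X0 s * (\<Sum>m<N. Ccos \<tau> s m)) (\<lambda>s. X0 s * (\<Sum>m. Ccos \<tau> s m))"
        unfolding ms_converges_def
      proof (rule ms_lemma[OF V, where e = "\<lambda>N. (suminf g - (\<Sum>m<N. g m))\<^sup>2"])
        show "(\<lambda>N. (suminf g - (\<Sum>m<N. g m))\<^sup>2) \<longlonglongrightarrow> 0"
          using tendsto_power[OF tail_lim[OF gs], of 2] by simp
        show "\<forall>\<^sub>F N in sequentially. AE s in M. (X0 s * (\<Sum>m<N. Ccos \<tau> s m) - X0 s * (\<Sum>m. Ccos \<tau> s m))\<^sup>2
              \<le> V s * (suminf g - (\<Sum>m<N. g m))\<^sup>2"
        proof (rule always_eventually, rule allI)
          fix N show "AE s in M. (X0 s * (\<Sum>m<N. Ccos \<tau> s m) - X0 s * (\<Sum>m. Ccos \<tau> s m))\<^sup>2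
              \<le> V s * (suminf g - (\<Sum>m<N. g m))\<^sup>2"
            using AEa
          proof eventually_elim
            case (elim s)
            have "\<bar>(\<Sum>m<N. Ccos \<tau> s m) - (\<Sum>m. Ccos \<tau> s m)\<bar> \<le> suminf g - (\<Sum>m<N. g m)"
              by (rule tail_bound[OF _ gs]) (unfold Ccos_def g_def, rule ccos_le, use elim in auto)
            thus ?case unfolding V_def by (rule mul_sq1)
          qed
        qed
      qed simp
      show "ms_converges M (\<lambda>N s. X1 s * (\<Sum>m<N. Csin \<tau> s m)) (\<lambda>s. X1 s * (\<Sum>m. Csin \<tau> s m))"
        unfolding ms_converges_def
      proof (rule ms_lemma[OF V, where e = "\<lambda>N. (suminf g' - (\<Sum>m<N. g' m))\<^sup>2"])
        show "(\<lambda>N. (suminf g' - (\<Sum>m<N. g' m))\<^sup>2) \<longlonglongrightarrow> 0"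
          using tendsto_power[OF tail_lim[OF gs'], of 2] by simp
        show "\<forall>\<^sub>F N in sequentially. AE s in M. (X1 s * (\<Sum>m<N. Csin \<tau> s m) - X1 s * (\<Sum>m. Csin \<tau> s m))\<^sup>2
              \<le> V s * (suminf g' - (\<Sum>m<N. g' m))\<^sup>2"
        proof (rule always_eventually, rule allI)
          fix N show "AE s in M. (X1 s * (\<Sum>m<N. Csin \<tau> s m) - X1 s * (\<Sum>m. Csin \<tau> s m))\<^sup>2
              \<le> V s * (suminf g' - (\<Sum>m<N. g' m))\<^sup>2"
            using AEa
          proof eventually_elim
            case (elim s)
            have "\<bar>(\<Sum>m<N. Csin \<tau> s m) - (\<Sum>m. Csin \<tau> s m)\<bar> \<le> suminf g' - (\<Sum>m<N. g' m)"
              by (rule tail_bound[OF _ gs']) (unfold Csin_def g'_def g_def, rule csin_le, use elim in auto)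
            thus ?case unfolding V_def by (rule mul_sq2)
          qed
        qed
      qed simp
    qed
  qed
  have so: "second_order M (\<lambda>s. X0 s * q0 s + X1 s * q1 s)"
    if m: "q0 \<in> borel_measurable M" "q1 \<in> borel_measurable M" and b: "AE s in M. \<bar>q0 s\<bar> \<le> 1 \<and> \<bar>q1 s\<bar> \<le> 1" for q0 q1
    unfolding second_order_def
  proof
    show "(\<lambda>s. X0 s * q0 s + X1 s * q1 s) \<in> borel_measurable M" using m by measurable
    show "integrable M (\<lambda>s. (X0 s * q0 s + X1 s * q1 s)\<^sup>2)"
    proof (rule Bochner_Integration.integrable_bound[where f = "\<lambda>s. V s * (2 * 1\<^sup>2)"])
      show "integrable M (\<lambda>s. V s * (2 * 1\<^sup>2))" using V(1) by simp
      show "(\<lambda>s. (X0 s * q0 s + X1 s * q1 s)\<^sup>2) \<in> borel_measurable M" using m by measurable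
      show "AE s in M. norm ((X0 s * q0 s + X1 s * q1 s)\<^sup>2) \<le> norm (V s * (2 * 1\<^sup>2))"
        using b
      proof eventually_elim
        case (elim s)
        have "(X0 s * q0 s + X1 s * q1 s)\<^sup>2 \<le> V s * (2 * 1\<^sup>2)" unfolding V_def
          by (rule sq_bound) (use elim in auto)
        thus ?case using V(2)[of s] by simp
      qed
    qed
  qed
  have sinb: "\<bar>- a * sin x\<bar> \<le> 1" if "0 \<le> a" "a \<le> 1" for a x :: real
    using that abs_sin_le_one[of x] by (simp add: abs_mult mult_le_one)
  have cosb: "\<bar>- a\<^sup>2 * cos x\<bar> \<le> 1" if "0 \<le> a" "a \<le> 1" for a x :: real
    using that abs_cos_le_one[of x] by (simp add: abs_mult mult_le_one power_le_one)
  have P2: "\<forall>\<tau>\<in>F. has_ms_deriv M F J X (DX \<tau>) \<tau>"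
  proof
    fix \<tau> assume \<tau>: "\<tau> \<in> F"
    show "has_ms_deriv M F J X (DX \<tau>) \<tau>" unfolding has_ms_deriv_def
    proof
      show "second_order M (DX \<tau>)" unfolding DX_def
      proof (rule so)
        show "AE s in M. \<bar>- A s * sin (A s * J \<tau>)\<bar> \<le> 1 \<and> \<bar>cos (A s * J \<tau>)\<bar> \<le> 1"
          using AEa by eventually_elim (use sinb in auto)
      qed (measurable, measurable)
      show "((\<lambda>\<tau>'. \<integral>\<^sup>+ s. ennreal (((X \<tau>' s - X \<tau> s) / (J \<tau>' - J \<tau>) - DX \<tau> s)\<^sup>2) \<partial>M) \<longlongrightarrow> 0) (at \<tau> within F)"
      proof (rule ms_lemma[OF V Jlim[OF \<tau>]])
        show "\<forall>\<^sub>F \<tau>' in at \<tau> within F. AE s in M. ((X \<tau>' s - X \<tau> s) / (J \<tau>' - J \<tau>) - DX \<tau> s)\<^sup>2 \<le> V s * (2 * (J \<tau>' - J \<tau>)\<^sup>2)"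
          using ev[OF \<tau>]
        proof (rule eventually_mono)
          fix \<tau>' assume t': "\<tau>' \<in> F \<and> J \<tau>' \<noteq> J \<tau>"
          hence h: "J \<tau>' - J \<tau> \<noteq> 0" by simp
          show "AE s in M. ((X \<tau>' s - X \<tau> s) / (J \<tau>' - J \<tau>) - DX \<tau> s)\<^sup>2 \<le> V s * (2 * (J \<tau>' - J \<tau>)\<^sup>2)"
            using AEa
          proof eventually_elim
            case (elim s)
            have "(X \<tau>' s - X \<tau> s) / (J \<tau>' - J \<tau>) - DX \<tau> s =
              X0 s * ((cos (A s * J \<tau>') - cos (A s * J \<tau>)) / (J \<tau>' - J \<tau>) - (- A s * sin (A s * J \<tau>)))
              + X1 s * ((Sf (A s) (J \<tau>') - Sf (A s) (J \<tau>)) / (J \<tau>' - J \<tau>) - cos (A s * J \<tau>))"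
              unfolding Xc DX_def by (rule quot_id[OF h])
            also have "(\<dots>)\<^sup>2 \<le> ((X0 s)\<^sup>2 + (X1 s)\<^sup>2) * (2 * \<bar>J \<tau>' - J \<tau>\<bar>\<^sup>2)"
              by (rule sq_bound) (use q0_bound[of "A s" "J \<tau>'" "J \<tau>"] q1_bound[of "A s" "J \<tau>'" "J \<tau>"] elim t' in auto)
            finally show ?case by (simp add: V_def)
          qed
        qed
      qed simp
    qed
  qed
  have P3: "\<forall>\<tau>\<in>F. has_ms_deriv M F J DX (DDX \<tau>) \<tau>"
  proof
    fix \<tau> assume \<tau>: "\<tau> \<in> F"
    show "has_ms_deriv M F J DX (DDX \<tau>) \<tau>" unfolding has_ms_deriv_def
    proof
      show "second_order M (DDX \<tau>)" unfolding DDX_def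
      proof (rule so)
        show "AE s in M. \<bar>- (A s)\<^sup>2 * cos (A s * J \<tau>)\<bar> \<le> 1 \<and> \<bar>- A s * sin (A s * J \<tau>)\<bar> \<le> 1"
          using AEa by eventually_elim (intro conjI sinb cosb, auto)
      qed (measurable, measurable)
      show "((\<lambda>\<tau>'. \<integral>\<^sup>+ s. ennreal (((DX \<tau>' s - DX \<tau> s) / (J \<tau>' - J \<tau>) - DDX \<tau> s)\<^sup>2) \<partial>M) \<longlongrightarrow> 0) (at \<tau> within F)"
      proof (rule ms_lemma[OF V Jlim[OF \<tau>]])
        show "\<forall>\<^sub>F \<tau>' in at \<tau> within F. AE s in M. ((DX \<tau>' s - DX \<tau> s) / (J \<tau>' - J \<tau>) - DDX \<tau> s)\<^sup>2 \<le> V s * (2 * (J \<tau>' - J \<tau>)\<^sup>2)"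
          using ev[OF \<tau>]
        proof (rule eventually_mono)
          fix \<tau>' assume t': "\<tau>' \<in> F \<and> J \<tau>' \<noteq> J \<tau>"
          hence h: "J \<tau>' - J \<tau> \<noteq> 0" by simp
          show "AE s in M. ((DX \<tau>' s - DX \<tau> s) / (J \<tau>' - J \<tau>) - DDX \<tau> s)\<^sup>2 \<le> V s * (2 * (J \<tau>' - J \<tau>)\<^sup>2)"
            using AEa
          proof eventually_elim
            case (elim s)
            have "(DX \<tau>' s - DX \<tau> s) / (J \<tau>' - J \<tau>) - DDX \<tau> s =
              X0 s * ((- A s * sin (A s * J \<tau>') - - A s * sin (A s * J \<tau>)) / (J \<tau>' - J \<tau>) - (- (A s)\<^sup>2 * cos (A s * J \<tau>)))
              + X1 s * ((cos (A s * J \<tau>') - cos (A s * J \<tau>)) / (J \<tau>' - J \<tau>) - (- A s * sin (A s * J \<tau>)))"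
              unfolding DX_def DDX_def by (rule quot_id[OF h])
            also have "(\<dots>)\<^sup>2 \<le> ((X0 s)\<^sup>2 + (X1 s)\<^sup>2) * (2 * \<bar>J \<tau>' - J \<tau>\<bar>\<^sup>2)"
              by (rule sq_bound) (use q0_bound[of "A s" "J \<tau>'" "J \<tau>"] p0_bound[of "A s" "J \<tau>'" "J \<tau>"] elim t' in auto)
            finally show ?case by (simp add: V_def)
          qed
        qed
      qed simp
    qed
  qed
  have P4: "\<forall>\<tau>\<in>F. AE s in M. DDX \<tau> s + (A s)\<^sup>2 * X \<tau> s = 0"
  proof (intro ballI AE_I2)
    fix \<tau> s
    show "DDX \<tau> s + (A s)\<^sup>2 * X \<tau> s = 0"
      unfolding DDX_def Xc Sf_def by (cases "A s = 0") (simp_all add: field_simps power2_eq_square)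
  qed
  have P5: "AE s in M. X \<tau>0 s = X0 s"
    by (rule AE_I2) (simp add: Xc \<open>J \<tau>0 = 0\<close> Sf_def)
  have P6: "AE s in M. DX \<tau>0 s = X1 s"
    by (rule AE_I2) (simp add: DX_def \<open>J \<tau>0 = 0\<close>)
  show ?thesis
    apply (rule conjI[OF P1])
    apply (rule exI[of _ DX], rule exI[of _ DDX])
    using P2 P3 P4 P5 P6 by (intro conjI)
qed
end
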